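(* Let $P$ and $U$ be finite sets of points in $\mathbb{R}^d$ with $|P|=n_{\mathrm p}$, $|U|=n_{\mathrm u}$, let $\pi\in(0,1)$, $w_{\mathrm p}=\pi/n_{\mathrm p}$, $w_{\mathrm u}=1/n_{\mathrm u}$, and let $P'\subseteq P$, $U'\subseteq U$, not both empty. Let $W_{\mathrm p}=|P'|w_{\mathrm p}$ and $W_{\mathrm n}=|U'|w_{\mathrm u}-|P'|w_{\mathrm p}$. Let $\ell(v,y)=1/(1+\exp(vy))$ be the sigmoid loss and $$\hat R_{\mathrm{uPU}}(v;P',U')=\sum_{\mathbf{x}\in P'}w_{\mathrm p}\ell(v,+1)-\sum_{\mathbf{x}\in P'}w_{\mathrm p}\ell(v,-1)+\sum_{\mathbf{x}\in U'}w_{\mathrm u}\ell(v,-1).$$ Then $$\inf_{v\in\mathbb{R}}\hat R_{\mathrm{uPU}}(v;P',U')=\min\{W_{\mathrm p},W_{\mathrm n}\}.$$ *)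

theory Defs
  imports "HOL-Analysis.Analysis"
begin

definition sigmoid_loss :: "real \<Rightarrow> real \<Rightarrow> real" where
  "sigmoid_loss v y = 1 / (1 + exp (v * y))"

definition R_uPU :: "real \<Rightarrow> real \<Rightarrow> real \<Rightarrow> 'a set \<Rightarrow> 'a set \<Rightarrow> real" where
  "R_uPU wp wu v P' U' =
     (\<Sum>x\<in>P'. wp * sigmoid_loss v 1) - (\<Sum>x\<in>P'. wp * sigmoid_loss v (-1))
     + (\<Sum>x\<in>U'. wu * sigmoid_loss v (-1))"

end

theory Submission
  imports Defs "HOL-Real_Asymp.Real_Asymp"
begin

lemma R_form:
  "R_uPU wp wu v P' U' = (real (card U') * wu - real (card P') * wp)
     + (real (card P') * wp - (real (card U') * wu - real (card P') * wp)) * (1 / (1 + exp v))"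
proof -
  have e: "1 / (1 + exp (- v)) = 1 - 1 / (1 + exp v)"
    by (simp add: exp_minus divide_simps add_pos_pos) (smt (verit) exp_gt_zero)
  have e': "sigmoid_loss v (-1) = 1 - sigmoid_loss v 1"
    using e by (simp add: sigmoid_loss_def)
  show ?thesis unfolding R_uPU_def e' by (simp add: sigmoid_loss_def algebra_simps)
qed

lemma lim_top: "((\<lambda>v::real. 1 / (1 + exp v)) \<longlongrightarrow> 0) at_top" by real_asymp
lemma lim_bot: "((\<lambda>v::real. 1 / (1 + exp v)) \<longlongrightarrow> 1) at_bot" by real_asymp

lemma inf_aux:
  fixes A B :: real
  shows "(INF v::real. B + (A - B) * (1 / (1 + exp v))) = min A B"
proof -
  define f where "f = (\<lambda>v::real. B + (A - B) * (1 / (1 + exp v)))"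
  have s01: "0 < 1 / (1 + exp v)" "1 / (1 + exp v) < (1::real)" for v
    by (auto simp: add_pos_pos)
  have lb: "min A B \<le> f v" for v
  proof -
    have "f v = A * (1 / (1 + exp v)) + B * (1 - 1 / (1 + exp v))"
      unfolding f_def by (simp add: algebra_simps add_divide_distrib[symmetric])
    also have "\<dots> \<ge> min A B * (1 / (1 + exp v)) + min A B * (1 - 1 / (1 + exp v))"
      using s01[of v] by (intro add_mono mult_right_mono) auto
    finally show ?thesis by (simp add: algebra_simps)
  qed
  have bdd: "bdd_below (range f)" using lb by (intro bdd_belowI2) auto
  have ge: "min A B \<le> (INF v. f v)" using lb by (intro cINF_greatest) auto
  have le: "(INF v. f v) \<le> f v" for v using bdd by (rule cINF_lower) auto
  have t1: "(f \<longlongrightarrow> B) at_top"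
    unfolding f_def using tendsto_add[OF tendsto_const tendsto_mult[OF tendsto_const lim_top]]
    by simp
  have t2: "(f \<longlongrightarrow> A) at_bot"
    unfolding f_def using tendsto_add[OF tendsto_const tendsto_mult[OF tendsto_const lim_bot], of B "A - B"]
    by simp
  have "(INF v. f v) \<le> B"
    by (rule tendsto_lowerbound[OF t1]) (use le in auto)
  moreover have "(INF v. f v) \<le> A"
    by (rule tendsto_lowerbound[OF t2]) (use le in auto)
  ultimately show ?thesis using ge unfolding f_def by simp
qed

theorem proposition5:
  fixes P U P' U' :: "'a::euclidean_space set" and pi :: real
  assumes "finite P" and "finite U"
    and "0 < pi" and "pi < 1"
    and "P' \<subseteq> P" and "U' \<subseteq> U"
    and "\<not> (P' = {} \<and> U' = {})"
  defines "wp \<equiv> pi / real (card P)" and "wu \<equiv> 1 / real (card U)"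
  defines "Wp \<equiv> real (card P') * wp"
    and "Wn \<equiv> real (card U') * wu - real (card P') * wp"
  shows "(INF v::real. R_uPU wp wu v P' U') = min Wp Wn"
  unfolding R_form Wp_def Wn_def by (rule inf_aux)

end
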